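(* Let $P, P' \subset \mathbb{R}^n$ be centrally symmetric convex polyhedra, with centers of symmetry $c(P)$ and $c(P')$. For $v \in \mathbb{R}^n$ let $T_v$ denote translation by $v$, and consider the offset parameter $$f(v) = \min\{ r \geq 0 : T_v(P) \subset N(P';r)\}.$$ Then $f(v)$ is minimal (over all $v \in \mathbb{R}^n$) when $T_v$ moves the center $c(P)$ to the center $c(P')$, i.e. for $v = c(P') - c(P)$.
   Context: For a subset $C \subset \mathbb{R}^n$ and $r \geq 0$, the $r$-offset of $C$ is $N(C;r) = \{ p \in \mathbb{R}^n : d(p,q) \leq r \text{ for some } q \in C\}$, where $d$ is the Euclidean distance. A polyhedron here means a bounded convex polyhedron (convex polytope). It is centrally symmetric if there is a point $c(P)$ (its center) such that the point reflection through $c(P)$ maps $P$ onto itself. *)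

theory Defs
  imports "HOL-Analysis.Analysis"
begin

definition offset :: "'a::euclidean_space set \<Rightarrow> real \<Rightarrow> 'a set" where
  "offset C r = {p. \<exists>q\<in>C. dist p q \<le> r}"

definition transl :: "'a::euclidean_space \<Rightarrow> 'a \<Rightarrow> 'a" where
  "transl v x = x + v"

definition centrally_symmetric_wrt :: "'a::euclidean_space set \<Rightarrow> 'a \<Rightarrow> bool" where
  "centrally_symmetric_wrt P c \<longleftrightarrow> (\<lambda>x. 2 *\<^sub>R c - x) ` P = P"

definition offset_param :: "'a::euclidean_space set \<Rightarrow> 'a set \<Rightarrow> 'a \<Rightarrow> real" where
  "offset_param P P' v = Inf {r. 0 \<le> r \<and> transl v ` P \<subseteq> offset P' r}"

end

theory Submission
  imports Defs
begin

lemma refl_mem: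
  assumes "centrally_symmetric_wrt P c" "y \<in> P"
  shows "2 *\<^sub>R c - y \<in> P"
proof -
  have "2 *\<^sub>R c - y \<in> (\<lambda>x. 2 *\<^sub>R c - x) ` P" using assms(2) by blast
  then show ?thesis using assms(1) unfolding centrally_symmetric_wrt_def by simp
qed

theorem lemma1:
  fixes P P' :: "'a::euclidean_space set" and c c' :: 'a
  assumes "polytope P" and "polytope P'"
    and "P \<noteq> {}" and "P' \<noteq> {}"
    and "centrally_symmetric_wrt P c" and "centrally_symmetric_wrt P' c'"
  shows "\<forall>v. offset_param P P' (c' - c) \<le> offset_param P P' v"
proof
  fix v
  define v0 where "v0 = c' - c"
  define w where "w = v - v0"
  have cvx: "convex P'" using assms(2) polytope_imp_convex by blast
  have bP: "bounded P" using assms(1) polytope_imp_bounded by blast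
  let ?S = "{r. 0 \<le> r \<and> transl v ` P \<subseteq> offset P' r}"
  let ?T = "{r. 0 \<le> r \<and> transl v0 ` P \<subseteq> offset P' r}"
  have sub: "?S \<subseteq> ?T"
  proof (rule subsetI)
    fix r assume rS: "r \<in> ?S"
    have r0: "0 \<le> r" using rS by simp
    have H0: "transl v ` P \<subseteq> offset P' r" using rS by simp
    have H: "\<exists>q\<in>P'. dist (x + v) q \<le> r" if "x \<in> P" for x
    proof -
      have "transl v x \<in> offset P' r" using H0 that by blast
      then show ?thesis unfolding transl_def offset_def by simp
    qed
    have "transl v0 ` P \<subseteq> offset P' r"
    proof
      fix y assume "y \<in> transl v0 ` P"
      then obtain x where x: "x \<in> P" and y: "y = x + v0" unfolding transl_def by auto
      obtain q1 where q1: "q1 \<in> P'" "dist (x + v) q1 \<le> r" using H[OF x] by blast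
      have x2: "2 *\<^sub>R c - x \<in> P" using refl_mem[OF assms(5) x] .
      obtain q2 where q2: "q2 \<in> P'" "dist (2 *\<^sub>R c - x + v) q2 \<le> r" using H[OF x2] by blast
      define q3 where "q3 = 2 *\<^sub>R c' - q2"
      have q3: "q3 \<in> P'" using refl_mem[OF assms(6) q2(1)] q3_def by simp
      have d3: "dist (x + v0 - w) q3 \<le> r"
      proof -
        have "x + v0 - w - q3 = - (2 *\<^sub>R c - x + v - q2)"
          unfolding q3_def w_def v0_def by (simp add: algebra_simps scaleR_2)
        then have "norm (x + v0 - w - q3) = norm (2 *\<^sub>R c - x + v - q2)"
          by (metis norm_minus_cancel)
        then show ?thesis using q2(2) by (simp only: dist_norm)
      qed
      have d1: "dist (x + v0 + w) q1 \<le> r" using q1(2) unfolding w_def by simp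
      define q where "q = (1/2) *\<^sub>R q1 + (1/2) *\<^sub>R q3"
      have qP: "q \<in> P'" unfolding q_def
        using convexD[OF cvx q1(1) q3, of "1/2" "1/2"] by simp
      have "y - q = (1/2) *\<^sub>R ((x + v0 + w) - q1) + (1/2) *\<^sub>R ((x + v0 - w) - q3)"
        unfolding y q_def by (simp add: algebra_simps scaleR_2[symmetric])
      then have "norm (y - q) \<le> (1/2) * norm ((x + v0 + w) - q1) + (1/2) * norm ((x + v0 - w) - q3)"
        by (metis (no_types) norm_triangle_ineq norm_scaleR abs_of_nonneg
            divide_nonneg_nonneg zero_le_one zero_le_numeral)
      also have "\<dots> \<le> (1/2) * r + (1/2) * r"
        using d1 d3 by (intro add_mono mult_left_mono) (auto simp: dist_norm)
      finally have "dist y q \<le> r" by (simp add: dist_norm)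
      then show "y \<in> offset P' r" using qP unfolding offset_def by blast
    qed
    then show "r \<in> ?T" using r0 by simp
  qed
  have ne: "?S \<noteq> {}"
  proof -
    obtain B where B: "\<And>x. x \<in> P \<Longrightarrow> norm x \<le> B" using bP bounded_iff by blast
    obtain q0 where q0: "q0 \<in> P'" using assms(4) by blast
    have "B + norm v + norm q0 \<in> ?S"
    proof -
      have "transl v ` P \<subseteq> offset P' (B + norm v + norm q0)"
      proof
        fix y assume "y \<in> transl v ` P"
        then obtain x where x: "x \<in> P" "y = x + v" unfolding transl_def by auto
        have "dist y q0 \<le> norm x + norm v + norm q0"
          unfolding x(2) dist_norm by (metis norm_triangle_ineq norm_triangle_ineq4 add_mono order_trans order_refl)
        also have "\<dots> \<le> B + norm v + norm q0" using B[OF x(1)] by simp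
        finally show "y \<in> offset P' (B + norm v + norm q0)" using q0 unfolding offset_def by blast
      qed
      moreover have "0 \<le> B + norm v + norm q0"
        using B[of "SOME x. x \<in> P"] assms(3) some_in_eq norm_ge_zero
        by (metis add_nonneg_nonneg order_trans)
      ultimately show ?thesis by simp
    qed
    then show ?thesis by blast
  qed
  have bb: "bdd_below ?T" by (rule bdd_belowI[of _ 0]) auto
  have "Inf ?T \<le> Inf ?S" by (rule cInf_superset_mono[OF ne bb sub])
  then show "offset_param P P' (c' - c) \<le> offset_param P P' v"
    unfolding offset_param_def v0_def by simp
qed

end
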